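(* Let $B=b_{20}D^2+b_{11}MD+b_{02}M^2+b_{10}D+b_{01}M+b_{00}I$ with $b_{20}\ne0$ and $\Delta_2\ne0$. Then the equation $Bu=0$ has the two linearly independent analytic solutions $u_j(x)=\exp\!\left(-\frac{\mathrm i}{4b_{20}}(b_{11}x^2+2b_{10}x)\right)v_j(x)$, $j=1,2$, where $v_j(x)=w_j\!\left(\left(-\frac{\Delta_2}{4b_{20}^2}\right)^{1/4}\left(x+\frac{\Delta_1}{2\Delta_2}\right)\right)$, $w_1(z)=\mathrm e^{-z^2/2}\Phi\!\left(\frac{1-\lambda}4,\frac12;z^2\right)$, $w_2(z)=\mathrm e^{-z^2/2}z\Phi\!\left(\frac{3-\lambda}4,\frac32;z^2\right)$, and $\lambda=\frac18\left(-\frac{\Delta_2}{b_{20}^2}\right)^{-3/2}\frac{\Delta_1^2-4\Delta_2\Delta_0}{b_{20}^4}$.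
   Context: $D=-\mathrm i\,d/dx$, $M$ = multiplication by $x$. $\Delta_2=b_{11}^2-4b_{20}b_{02}$, $\Delta_1=2b_{11}b_{10}-4b_{20}b_{01}$, $\Delta_0=b_{10}^2-4b_{20}b_{00}-2\mathrm i b_{20}b_{11}$. Powers: $z^\mu=\mathrm e^{\mu\log|z|+\mathrm i\mu\operatorname{Arg}z}$ with principal argument $\operatorname{Arg}z\in(-\pi,\pi]$. $\Phi(p,q;z)=\sum_{k\ge0}\frac{(p)_k}{k!(q)_k}z^k$ with $(p)_0=1$, $(p)_k=p(p+1)\cdots(p+k-1)$. *)

theory Defs
  imports "HOL-Analysis.Analysis"
begin

definition kummer :: "complex \<Rightarrow> complex \<Rightarrow> complex \<Rightarrow> complex" where
  "kummer p q z = (\<Sum>k. pochhammer p k / (of_nat (fact k) * pochhammer q k) * z ^ k)"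

text \<open>The operator B = b20 D^2 + b11 M D + b02 M^2 + b10 D + b01 M + b00 I
  with D = -i d/dx and M multiplication by x, applied to u at the point x.\<close>
definition Bop :: "complex \<Rightarrow> complex \<Rightarrow> complex \<Rightarrow> complex \<Rightarrow> complex \<Rightarrow> complex
    \<Rightarrow> (complex \<Rightarrow> complex) \<Rightarrow> complex \<Rightarrow> complex" where
  "Bop b20 b11 b02 b10 b01 b00 u x =
     b20 * ((-\<i>) * deriv (\<lambda>y. (-\<i>) * deriv u y) x)
   + b11 * (x * ((-\<i>) * deriv u x))
   + b02 * (x\<^sup>2 * u x)
   + b10 * ((-\<i>) * deriv u x)
   + b01 * (x * u x)
   + b00 * u x"

definition Delta2 :: "complex \<Rightarrow> complex \<Rightarrow> complex \<Rightarrow> complex" where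
  "Delta2 b20 b11 b02 = b11\<^sup>2 - 4 * b20 * b02"

definition Delta1 :: "complex \<Rightarrow> complex \<Rightarrow> complex \<Rightarrow> complex \<Rightarrow> complex" where
  "Delta1 b20 b11 b10 b01 = 2 * b11 * b10 - 4 * b20 * b01"

definition Delta0 :: "complex \<Rightarrow> complex \<Rightarrow> complex \<Rightarrow> complex \<Rightarrow> complex" where
  "Delta0 b20 b11 b10 b00 = b10\<^sup>2 - 4 * b20 * b00 - 2 * \<i> * b20 * b11"

text \<open>Complex powers use the principal branch: z powr mu = exp (mu * Ln z),
  Arg in (-pi, pi].\<close>
definition lam :: "complex \<Rightarrow> complex \<Rightarrow> complex \<Rightarrow> complex \<Rightarrow> complex \<Rightarrow> complex \<Rightarrow> complex" where
  "lam b20 b11 b02 b10 b01 b00 =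
     (let D2 = Delta2 b20 b11 b02; D1 = Delta1 b20 b11 b10 b01; D0 = Delta0 b20 b11 b10 b00
      in 1/8 * (- D2 / b20\<^sup>2) powr (-3/2) * ((D1\<^sup>2 - 4 * D2 * D0) / b20 ^ 4))"

definition w1 :: "complex \<Rightarrow> complex \<Rightarrow> complex" where
  "w1 l z = exp (- z\<^sup>2 / 2) * kummer ((1 - l) / 4) (1/2) (z\<^sup>2)"

definition w2 :: "complex \<Rightarrow> complex \<Rightarrow> complex" where
  "w2 l z = exp (- z\<^sup>2 / 2) * z * kummer ((3 - l) / 4) (3/2) (z\<^sup>2)"

definition usol :: "(complex \<Rightarrow> complex \<Rightarrow> complex) \<Rightarrow> complex \<Rightarrow> complex \<Rightarrow> complex
    \<Rightarrow> complex \<Rightarrow> complex \<Rightarrow> complex \<Rightarrow> complex \<Rightarrow> complex" where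
  "usol w b20 b11 b02 b10 b01 b00 x =
     (let D2 = Delta2 b20 b11 b02; D1 = Delta1 b20 b11 b10 b01;
          l = lam b20 b11 b02 b10 b01 b00
      in exp (- \<i> / (4 * b20) * (b11 * x\<^sup>2 + 2 * b10 * x))
         * w l ((- D2 / (4 * b20\<^sup>2)) powr (1/4) * (x + D1 / (2 * D2))))"

end

theory Submission
  imports Defs "HOL-Complex_Analysis.Conformal_Mappings"
begin


definition kc :: "complex \<Rightarrow> complex \<Rightarrow> nat \<Rightarrow> complex" where
  "kc p q n = pochhammer p n / (of_nat (fact n) * pochhammer q n)"

lemma kummer_kc: "kummer p q z = (\<Sum>n. kc p q n * z ^ n)"
  by (simp add: kummer_def kc_def)

lemma poch_nz: "qr > 0 \<Longrightarrow> pochhammer (complex_of_real qr) n \<noteq> 0"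
proof
  assume "qr > 0" "pochhammer (complex_of_real qr) n = 0"
  then obtain k where "complex_of_real qr = - of_nat k" by (auto simp: pochhammer_eq_0_iff)
  then have "qr = - real k" by (metis of_real_eq_iff of_real_minus of_real_of_nat_eq)
  with \<open>qr > 0\<close> show False by simp
qed

lemma kc_Suc: assumes "qr > 0"
  shows "kc p (of_real qr) (Suc n) = kc p (of_real qr) n * (p + of_nat n) / ((of_nat n + 1) * (of_real qr + of_nat n))"
proof -
  have "of_real qr + of_nat n \<noteq> (0::complex)"
    by (metis assms(1) add_pos_nonneg of_nat_0_le_iff of_real_eq_0_iff of_real_of_nat_eq of_real_add less_irrefl)
  then show ?thesis using poch_nz[OF assms, of n]
    by (simp add: kc_def pochhammer_Suc field_simps)
qed

lemma kc_summable: assumes "qr > 0"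
  shows "summable (\<lambda>n. kc p (of_real qr) n * z ^ n)"
proof -
  obtain N :: nat where N: "4 * (norm p + 1) * (norm z + 1) < real N" using reals_Archimedean2 by blast
  show ?thesis
  proof (rule summable_ratio_test[of "1/2" "Suc N"])
    fix n assume n: "Suc N \<le> n"
    have r: "norm ((p + of_nat n) / ((of_nat n + 1) * (of_real qr + of_nat n))) \<le> (norm p + 1) / (real n + 1)"
    proof -
      have a: "norm (p + of_nat n) \<le> norm p + real n" by (metis norm_of_nat norm_triangle_ineq)
      have b: "norm (of_real qr + of_nat n :: complex) = qr + real n"
        by (metis assms abs_of_nonneg add_nonneg_nonneg less_imp_le norm_of_real of_nat_0_le_iff of_real_add of_real_of_nat_eq)
      have c: "norm (of_nat n + 1 :: complex) = real n + 1"
        by (metis norm_of_nat of_nat_Suc add.commute)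
      have "norm ((p + of_nat n) / ((of_nat n + 1) * (of_real qr + of_nat n))) = norm (p + of_nat n) / ((real n + 1) * (qr + real n))"
        by (simp add: norm_divide norm_mult b c)
      also have "\<dots> \<le> (norm p + real n) / ((real n + 1) * real n)"
        using a n assms by (intro frac_le) (auto intro!: mult_pos_pos)
      also have "\<dots> \<le> (norm p + 1) * real n / ((real n + 1) * real n)"
      proof (rule divide_right_mono)
        have "norm p * 1 \<le> norm p * real n" using n by (intro mult_left_mono) auto
        then show "norm p + real n \<le> (norm p + 1) * real n" by (simp add: algebra_simps)
      qed simp
      also have "\<dots> = (norm p + 1) / (real n + 1)" using n by simp

      finally show ?thesis .
    qed
    have "norm (kc p (of_real qr) (Suc n) * z ^ Suc n)
        = norm (kc p (of_real qr) n * z ^ n) * (norm ((p + of_nat n) / ((of_nat n + 1) * (of_real qr + of_nat n))) * norm z)"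
    proof -
      have "kc p (of_real qr) (Suc n) * z ^ Suc n = (kc p (of_real qr) n * z ^ n) * (((p + of_nat n) / ((of_nat n + 1) * (of_real qr + of_nat n))) * z)"
        by (simp add: kc_Suc[OF assms])
      then show ?thesis by (simp only: norm_mult)
    qed
    also have "\<dots> \<le> norm (kc p (of_real qr) n * z ^ n) * ((norm p + 1) / (real n + 1) * norm z)"
      by (intro mult_left_mono mult_right_mono r) auto
    also have "\<dots> \<le> norm (kc p (of_real qr) n * z ^ n) * (1/2)"
    proof (intro mult_left_mono)
      have "(norm p + 1) * norm z \<le> (norm p + 1) * (norm z + 1)" by (intro mult_left_mono) auto
      also have "\<dots> \<le> (real n + 1) / 2"
      proof -
        have "real N \<le> real n" using n by simp
        then show ?thesis using N by (simp add: algebra_simps)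
      qed
      finally show "(norm p + 1) / (real n + 1) * norm z \<le> 1/2" by (simp add: field_simps)
    qed auto
    finally show "norm (kc p (of_real qr) (Suc n) * z ^ Suc n) \<le> 1/2 * norm (kc p (of_real qr) n * z ^ n)" by simp
  qed simp
qed

lemma shift_sums:
  fixes c :: "nat \<Rightarrow> complex"
  assumes "(\<lambda>n. diffs c n * z ^ n) sums S"
  shows "(\<lambda>n. of_nat n * c n * z ^ n) sums (z * S)"
proof -
  have "(\<lambda>n. z * (diffs c n * z ^ n)) sums (z * S)" using sums_mult[OF assms] .
  moreover have "(\<lambda>n. z * (diffs c n * z ^ n)) = (\<lambda>n. of_nat (Suc n) * c (Suc n) * z ^ Suc n)"
    by (auto simp: diffs_def)
  ultimately have "(\<lambda>n. (\<lambda>n. of_nat n * c n * z ^ n) (Suc n)) sums (z * S)" by simp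
  then show ?thesis by (subst (asm) sums_Suc_iff) simp
qed

lemma kummer_ode:
  fixes p z :: complex
  assumes "qr > 0"
  defines "c \<equiv> kc p (of_real qr)"
  shows "z * (\<Sum>n. diffs (diffs c) n * z ^ n) + (of_real qr - z) * (\<Sum>n. diffs c n * z ^ n) - p * (\<Sum>n. c n * z ^ n) = 0"
proof -
  define q :: complex where "q = of_real qr"
  have s0: "\<And>y. summable (\<lambda>n. c n * y ^ n)" unfolding c_def using kc_summable[OF assms(1)] .
  have s1: "\<And>y. summable (\<lambda>n. diffs c n * y ^ n)" using termdiff_converges_all[OF s0] .
  have s2: "\<And>y. summable (\<lambda>n. diffs (diffs c) n * y ^ n)" using termdiff_converges_all[OF s1] .
  define S0 where "S0 = (\<Sum>n. c n * z ^ n)"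
  define S1 where "S1 = (\<Sum>n. diffs c n * z ^ n)"
  define S2 where "S2 = (\<Sum>n. diffs (diffs c) n * z ^ n)"
  have A: "(\<lambda>n. of_nat n * diffs c n * z ^ n) sums (z * S2)"
    using shift_sums[OF summable_sums[OF s2]] unfolding S2_def .
  have B: "(\<lambda>n. of_nat n * c n * z ^ n) sums (z * S1)"
    using shift_sums[OF summable_sums[OF s1]] unfolding S1_def .
  have C: "(\<lambda>n. q * (diffs c n * z ^ n)) sums (q * S1)"
    using sums_mult[OF summable_sums[OF s1]] unfolding S1_def .
  have D: "(\<lambda>n. p * (c n * z ^ n)) sums (p * S0)"
    using sums_mult[OF summable_sums[OF s0]] unfolding S0_def .
  have E: "(\<lambda>n. of_nat n * diffs c n * z ^ n + q * (diffs c n * z ^ n) - of_nat n * c n * z ^ n - p * (c n * z ^ n))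
      sums (z * S2 + q * S1 - z * S1 - p * S0)"
    by (intro sums_diff sums_add A B C D)
  have Z: "of_nat n * diffs c n * z ^ n + q * (diffs c n * z ^ n) - of_nat n * c n * z ^ n - p * (c n * z ^ n) = 0" for n
  proof -
    have eq: "c (Suc n) = c n * (p + of_nat n) / ((of_nat n + 1) * (q + of_nat n))"
      unfolding c_def q_def by (rule kc_Suc[OF assms(1)])
    moreover have "q + of_nat n \<noteq> 0" unfolding q_def
      by (metis assms(1) add_pos_nonneg of_nat_0_le_iff of_real_eq_0_iff of_real_of_nat_eq of_real_add less_irrefl)
    moreover have "(of_nat n + 1 :: complex) \<noteq> 0"
      by (metis of_nat_Suc of_nat_eq_0_iff Suc_neq_Zero add.commute)
    ultimately have Y: "(of_nat n + 1) * (q + of_nat n) \<noteq> 0" by simp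
    have R: "(of_nat n + 1) * (q + of_nat n) * c (Suc n) = c n * (p + of_nat n)"
      unfolding eq times_divide_eq_right using nonzero_mult_div_cancel_left[OF Y] by blast
    have "of_nat n * diffs c n * z ^ n + q * (diffs c n * z ^ n) - of_nat n * c n * z ^ n - p * (c n * z ^ n)
       = z ^ n * ((of_nat n + 1) * (q + of_nat n) * c (Suc n) - c n * (p + of_nat n))"
      by (simp add: diffs_def algebra_simps)
    then show ?thesis using R by simp
  qed
  from E have "(\<lambda>n. 0) sums (z * S2 + q * S1 - z * S1 - p * S0)" by (simp only: Z)
  then have "z * S2 + q * S1 - z * S1 - p * S0 = 0" using sums_unique2 sums_zero by blast
  then show ?thesis unfolding S0_def S1_def S2_def q_def by (simp add: algebra_simps)
qed

lemma kummer_derivs: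
  fixes p :: complex
  assumes "qr > 0"
  shows "\<exists>K1 K2. \<forall>z. (kummer p (of_real qr) has_field_derivative K1 z) (at z)
        \<and> (K1 has_field_derivative K2 z) (at z)
        \<and> z * K2 z + (of_real qr - z) * K1 z - p * kummer p (of_real qr) z = 0"
proof -
  define c where "c = kc p (of_real qr)"
  have s0: "\<And>y. summable (\<lambda>n. c n * y ^ n)" unfolding c_def using kc_summable[OF assms] .
  have s1: "\<And>y. summable (\<lambda>n. diffs c n * y ^ n)" using termdiff_converges_all[OF s0] .
  have K: "kummer p (of_real qr) = (\<lambda>z. \<Sum>n. c n * z ^ n)" by (auto simp: kummer_kc c_def)
  show ?thesis
    apply (rule exI[of _ "\<lambda>z. \<Sum>n. diffs c n * z ^ n"], rule exI[of _ "\<lambda>z. \<Sum>n. diffs (diffs c) n * z ^ n"])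
    unfolding K using termdiffs_strong_converges_everywhere[OF s0] termdiffs_strong_converges_everywhere[OF s1]
      kummer_ode[OF assms, where p=p] unfolding c_def by blast
qed

lemma weber_gen:
  fixes h h1 h2 :: "complex \<Rightarrow> complex"
  assumes d1: "\<And>z. (h has_field_derivative h1 z) (at z)"
    and d2: "\<And>z. (h1 has_field_derivative h2 z) (at z)"
    and ode: "\<And>z. h2 z - 2 * z * h1 z + (l - 1) * h z = 0"
  shows "((\<lambda>z. exp (- z\<^sup>2 / 2) * h z) has_field_derivative exp (- z\<^sup>2 / 2) * (h1 z - z * h z)) (at z)"
    and "((\<lambda>z. exp (- z\<^sup>2 / 2) * (h1 z - z * h z)) has_field_derivative (z\<^sup>2 - l) * (exp (- z\<^sup>2 / 2) * h z)) (at z)"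
proof -
  show "((\<lambda>z. exp (- z\<^sup>2 / 2) * h z) has_field_derivative exp (- z\<^sup>2 / 2) * (h1 z - z * h z)) (at z)"
    by (auto intro!: derivative_eq_intros d1 simp: algebra_simps)
  have "((\<lambda>z. exp (- z\<^sup>2 / 2) * (h1 z - z * h z)) has_field_derivative
      exp (- z\<^sup>2 / 2) * (h2 z - 2 * z * h1 z + (z\<^sup>2 - 1) * h z)) (at z)"
    by (auto intro!: derivative_eq_intros d1 d2 simp: algebra_simps power2_eq_square)
  moreover have "exp (- z\<^sup>2 / 2) * (h2 z - 2 * z * h1 z + (z\<^sup>2 - 1) * h z) = (z\<^sup>2 - l) * (exp (- z\<^sup>2 / 2) * h z)"
  proof -
    have "h2 z - 2 * z * h1 z + (z\<^sup>2 - 1) * h z = (z\<^sup>2 - l) * h z"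
      using ode[of z] by (simp add: algebra_simps)
    then show ?thesis by simp
  qed
  ultimately show "((\<lambda>z. exp (- z\<^sup>2 / 2) * (h1 z - z * h z)) has_field_derivative (z\<^sup>2 - l) * (exp (- z\<^sup>2 / 2) * h z)) (at z)"
    by (simp only:)
qed

lemma kummer_zero: "kummer p q 0 = 1"
  unfolding kummer_kc by (subst powser_zero) (simp add: kc_def)

lemma sq_deriv: "((\<lambda>z::complex. z\<^sup>2) has_field_derivative 2 * z) (at z)"
  by (auto intro!: derivative_eq_intros)

lemma w1_derivs:
  "\<exists>W1. \<forall>z. (w1 l has_field_derivative W1 z) (at z) \<and> (W1 has_field_derivative (z\<^sup>2 - l) * w1 l z) (at z)"
proof -
  define p where "p = (1 - l) / 4"
  have half: "(complex_of_real (1/2)) = 1/2" by simp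
  obtain K1 K2 where KK: "\<And>z. (kummer p (1/2) has_field_derivative K1 z) (at z)"
     "\<And>z. (K1 has_field_derivative K2 z) (at z)"
     "\<And>z. z * K2 z + (1/2 - z) * K1 z - p * kummer p (1/2) z = 0"
    using kummer_derivs[of "1/2" p] unfolding half by auto
  define h where "h z = kummer p (1/2) (z\<^sup>2)" for z
  define h1 where "h1 z = K1 (z\<^sup>2) * (2 * z)" for z
  define h2 where "h2 z = K2 (z\<^sup>2) * (2 * z) * (2 * z) + 2 * K1 (z\<^sup>2)" for z
  have d1: "(h has_field_derivative h1 z) (at z)" for z
    unfolding h_def[abs_def] h1_def using DERIV_chain2[OF KK(1) sq_deriv] .
  have d2: "(h1 has_field_derivative h2 z) (at z)" for z
    unfolding h1_def[abs_def] h2_def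
    by (rule DERIV_cong[OF DERIV_mult[OF DERIV_chain2[OF KK(2) sq_deriv], of "\<lambda>z. 2 * z" 2]])
       (auto intro!: derivative_eq_intros simp: algebra_simps)
  have ode: "h2 z - 2 * z * h1 z + (l - 1) * h z = 0" for z
  proof -
    have "h2 z - 2 * z * h1 z + (l - 1) * h z
        = 4 * (z\<^sup>2 * K2 (z\<^sup>2) + (1/2 - z\<^sup>2) * K1 (z\<^sup>2) - p * kummer p (1/2) (z\<^sup>2))"
      unfolding h_def h1_def h2_def p_def by (simp add: field_simps power2_eq_square)
    then show ?thesis using KK(3)[of "z\<^sup>2"] by simp
  qed
  have w: "w1 l = (\<lambda>z. exp (- z\<^sup>2 / 2) * h z)" by (auto simp: w1_def h_def p_def)
  show ?thesis
    apply (rule exI[of _ "\<lambda>z. exp (- z\<^sup>2 / 2) * (h1 z - z * h z)"])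
    unfolding w using weber_gen[OF d1 d2 ode] by blast
qed

lemma w2_derivs:
  "\<exists>W1. W1 0 = 1 \<and> (\<forall>z. (w2 l has_field_derivative W1 z) (at z) \<and> (W1 has_field_derivative (z\<^sup>2 - l) * w2 l z) (at z))"
proof -
  define p where "p = (3 - l) / 4"
  have half: "(complex_of_real (3/2)) = 3/2" by simp
  obtain K1 K2 where KK: "\<And>z. (kummer p (3/2) has_field_derivative K1 z) (at z)"
     "\<And>z. (K1 has_field_derivative K2 z) (at z)"
     "\<And>z. z * K2 z + (3/2 - z) * K1 z - p * kummer p (3/2) z = 0"
    using kummer_derivs[of "3/2" p] unfolding half by auto
  define h where "h z = z * kummer p (3/2) (z\<^sup>2)" for z
  define h1 where "h1 z = kummer p (3/2) (z\<^sup>2) + 2 * z\<^sup>2 * K1 (z\<^sup>2)" for z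
  define h2 where "h2 z = 6 * z * K1 (z\<^sup>2) + 4 * z ^ 3 * K2 (z\<^sup>2)" for z
  have d1: "(h has_field_derivative h1 z) (at z)" for z
    unfolding h_def[abs_def] h1_def
    by (rule DERIV_cong[OF DERIV_mult[OF DERIV_ident DERIV_chain2[OF KK(1) sq_deriv]]])
       (simp add: algebra_simps power2_eq_square)
  have d2: "(h1 has_field_derivative h2 z) (at z)" for z
    unfolding h1_def[abs_def] h2_def
    by (rule DERIV_cong[OF DERIV_add[OF DERIV_chain2[OF KK(1) sq_deriv]
          DERIV_mult[OF DERIV_cmult[OF sq_deriv, of 2] DERIV_chain2[OF KK(2) sq_deriv]]]])
       (simp add: algebra_simps power2_eq_square power3_eq_cube)
  have ode: "h2 z - 2 * z * h1 z + (l - 1) * h z = 0" for z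
  proof -
    have "h2 z - 2 * z * h1 z + (l - 1) * h z
        = 4 * z * (z\<^sup>2 * K2 (z\<^sup>2) + (3/2 - z\<^sup>2) * K1 (z\<^sup>2) - p * kummer p (3/2) (z\<^sup>2))"
      unfolding h_def h1_def h2_def p_def by (simp add: field_simps power2_eq_square power3_eq_cube)
    then show ?thesis using KK(3)[of "z\<^sup>2"] by simp
  qed
  have w: "w2 l = (\<lambda>z. exp (- z\<^sup>2 / 2) * h z)" by (auto simp: w2_def h_def p_def)
  show ?thesis
    apply (rule exI[of _ "\<lambda>z. exp (- z\<^sup>2 / 2) * (h1 z - z * h z)"])
    unfolding w using weber_gen[OF d1 d2 ode] by (auto simp: h1_def h_def kummer_zero)
qed

lemma u_gen:
  fixes W W1 :: "complex \<Rightarrow> complex" and b20 b11 b02 b10 b01 b00 c d l :: complex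
  assumes dW: "\<And>z. (W has_field_derivative W1 z) (at z)"
    and dW1: "\<And>z. (W1 has_field_derivative (z\<^sup>2 - l) * W z) (at z)"
    and b20: "b20 \<noteq> 0"
    and key: "\<And>x. 4 * b20\<^sup>2 * (c\<^sup>2 * ((c * (x + d))\<^sup>2 - l))
        = - (Delta2 b20 b11 b02 * x\<^sup>2 + Delta1 b20 b11 b10 b01 * x + Delta0 b20 b11 b10 b00)"
  defines "u \<equiv> \<lambda>x. exp (- \<i> / (4 * b20) * (b11 * x\<^sup>2 + 2 * b10 * x)) * W (c * (x + d))"
  shows "u holomorphic_on UNIV" and "Bop b20 b11 b02 b10 b01 b00 u x = 0"
proof -
  define E where "E x = exp (- \<i> / (4 * b20) * (b11 * x\<^sup>2 + 2 * b10 * x))" for x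
  define f where "f x = - \<i> / (4 * b20) * (b11 * (2 * x) + 2 * b10)" for x
  define f2 where "f2 = - \<i> / (4 * b20) * (b11 * 2)"
  have dE: "(E has_field_derivative E x * f x) (at x)" for x
    unfolding E_def[abs_def] f_def
    using b20 by (auto intro!: derivative_eq_intros simp: field_simps power2_eq_square)
  have df: "(f has_field_derivative f2) (at x)" for x
    unfolding f_def[abs_def] f2_def
    using b20 by (auto intro!: derivative_eq_intros simp: field_simps)
  have dlin: "((\<lambda>x. c * (x + d)) has_field_derivative c) (at x)" for x
    by (auto intro!: derivative_eq_intros)
  have Wc: "((\<lambda>x. W (c * (x + d))) has_field_derivative W1 (c * (x + d)) * c) (at x)" for x
    using DERIV_chain2[OF dW dlin] .
  have W1c: "((\<lambda>x. W1 (c * (x + d))) has_field_derivative ((c * (x + d))\<^sup>2 - l) * W (c * (x + d)) * c) (at x)" for x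
    using DERIV_chain2[OF dW1 dlin] .
  define u1 where "u1 x = E x * (f x * W (c * (x + d)) + c * W1 (c * (x + d)))" for x
  define u2 where "u2 x = E x * f x * (f x * W (c * (x + d)) + c * W1 (c * (x + d)))
     + E x * (f2 * W (c * (x + d)) + f x * (W1 (c * (x + d)) * c) + c * (((c * (x + d))\<^sup>2 - l) * W (c * (x + d)) * c))" for x
  have u_eq: "u = (\<lambda>x. E x * W (c * (x + d)))" unfolding u_def E_def by simp
  have du: "(u has_field_derivative u1 x) (at x)" for x
    unfolding u_eq u1_def by (rule DERIV_cong[OF DERIV_mult[OF dE Wc]]) (simp add: algebra_simps)
  have du1: "(u1 has_field_derivative u2 x) (at x)" for x
    unfolding u1_def[abs_def] u2_def
    by (rule DERIV_cong[OF DERIV_mult[OF dE DERIV_add[OF DERIV_mult[OF df Wc] DERIV_cmult[OF W1c, of c]]]])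
       (simp add: algebra_simps)
  show "u holomorphic_on UNIV"
    using du by (auto simp: holomorphic_on_def field_differentiable_def)
  have deru: "deriv u = u1" using du by (auto intro!: DERIV_imp_deriv)
  have deru2: "deriv (\<lambda>y. - \<i> * deriv u y) x = - \<i> * u2 x"
    unfolding deru by (intro DERIV_imp_deriv DERIV_cmult du1)
  define v where "v = W (c * (x + d))"
  define V where "V = W1 (c * (x + d))"
  have k: "c * (((c * (x + d))\<^sup>2 - l) * v * c) = - (Delta2 b20 b11 b02 * x\<^sup>2 + Delta1 b20 b11 b10 b01 * x + Delta0 b20 b11 b10 b00) / (4 * b20\<^sup>2) * v"
  proof -
    have "c * (((c * (x + d))\<^sup>2 - l) * v * c) = (4 * b20\<^sup>2 * (c\<^sup>2 * ((c * (x + d))\<^sup>2 - l))) / (4 * b20\<^sup>2) * v"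
      using b20 by (simp add: field_simps power2_eq_square)
    then show ?thesis unfolding key .
  qed
  have "Bop b20 b11 b02 b10 b01 b00 u x = E x * (
      b20 * ((-\<i>) * ((-\<i>) * (f x * (f x * v + c * V) + (f2 * v + f x * (V * c)
         + c * (((c * (x + d))\<^sup>2 - l) * v * c)))))
     + b11 * (x * ((-\<i>) * (f x * v + c * V)))
     + b02 * (x\<^sup>2 * v) + b10 * ((-\<i>) * (f x * v + c * V)) + b01 * (x * v) + b00 * v)"
    unfolding Bop_def unfolding deru2 unfolding deru unfolding u1_def u2_def u_eq v_def V_def by (simp add: algebra_simps)
  also have "\<dots> = E x * (
      b20 * ((-\<i>) * ((-\<i>) * (f x * (f x * v + c * V) + (f2 * v + f x * (V * c)
         + (- (Delta2 b20 b11 b02 * x\<^sup>2 + Delta1 b20 b11 b10 b01 * x + Delta0 b20 b11 b10 b00) / (4 * b20\<^sup>2) * v)))))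
     + b11 * (x * ((-\<i>) * (f x * v + c * V)))
     + b02 * (x\<^sup>2 * v) + b10 * ((-\<i>) * (f x * v + c * V)) + b01 * (x * v) + b00 * v)"
    unfolding k by (rule refl)
  also have "\<dots> = 0"
    using b20 unfolding f_def f2_def Delta2_def Delta1_def Delta0_def
    by (simp add: field_simps power2_eq_square)
  finally show "Bop b20 b11 b02 b10 b01 b00 u x = 0" .
qed



lemma e8: "exp (-(3/2) * complex_of_real (ln 4)) = 1/8"
proof -
  have l4: "ln (4::real) = 2 * ln 2" using ln_realpow[of 2 2] by simp
  have "-(3/2) * complex_of_real (ln 4) = - (of_nat 3 * complex_of_real (ln 2))" by (simp add: l4)
  then have "exp (-(3/2) * complex_of_real (ln 4)) = inverse (exp (complex_of_real (ln 2)) ^ 3)"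
    using exp_of_nat_mult[of 3 "complex_of_real (ln 2)"] by (simp add: exp_minus)
  also have "exp (complex_of_real (ln 2)) = 2"
  proof -
    have "exp (complex_of_real (ln 2)) = complex_of_real (exp (ln 2))" by (rule exp_of_real)
    also have "\<dots> = 2" by simp
    finally show ?thesis .
  qed
  also have "inverse (2 ^ 3 :: complex) = 1/8" by simp
  finally show ?thesis .
qed

lemma params:
  fixes b20 b11 b02 b10 b01 b00 :: complex
  assumes b20: "b20 \<noteq> 0" and D2: "Delta2 b20 b11 b02 \<noteq> 0"
  defines "c \<equiv> (- Delta2 b20 b11 b02 / (4 * b20\<^sup>2)) powr (1/4)"
      and "d \<equiv> Delta1 b20 b11 b10 b01 / (2 * Delta2 b20 b11 b02)"
      and "l \<equiv> lam b20 b11 b02 b10 b01 b00"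
  shows "4 * b20\<^sup>2 * (c\<^sup>2 * ((c * (x + d))\<^sup>2 - l))
        = - (Delta2 b20 b11 b02 * x\<^sup>2 + Delta1 b20 b11 b10 b01 * x + Delta0 b20 b11 b10 b00)"
    and "c \<noteq> 0"
proof -
  define D2 D1 D0 where "D2 = Delta2 b20 b11 b02" and "D1 = Delta1 b20 b11 b10 b01" and "D0 = Delta0 b20 b11 b10 b00"
  define a where "a = - D2 / (4 * b20\<^sup>2)"
  have a0: "a \<noteq> 0" using b20 D2 unfolding a_def D2_def by simp
  have c: "c = exp (1/4 * Ln a)" using a0 unfolding c_def a_def D2_def by (simp add: powr_def)
  show "c \<noteq> 0" using c by simp
  have c4: "c ^ 4 = a"
  proof -
    have "c ^ 4 = exp (of_nat 4 * (1/4 * Ln a))" unfolding c by (rule exp_of_nat_mult[symmetric])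
    also have "\<dots> = a" using a0 by simp
    finally show ?thesis .
  qed
  have c2: "c\<^sup>2 = exp (1/2 * Ln a)"
  proof -
    have "c\<^sup>2 = exp (of_nat 2 * (1/4 * Ln a))" unfolding c by (rule exp_of_nat_mult[symmetric])
    then show ?thesis by simp
  qed
  have A: "- D2 / b20\<^sup>2 = complex_of_real 4 * a" unfolding a_def using b20 by (simp add: field_simps)
  have lnA: "Ln (complex_of_real 4 * a) = complex_of_real (ln 4) + Ln a"
    using Ln_times_of_real[of 4 a] a0 Ln_of_real[of 4] by simp
  have P: "(- D2 / b20\<^sup>2) powr (-3/2) = exp (-(3/2) * complex_of_real (ln 4)) * exp (-(3/2) * Ln a)"
  proof -
    have "(complex_of_real 4 * a) powr (-3/2) = exp (-(3/2) * Ln (complex_of_real 4 * a))"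
      using a0 by (simp add: powr_def)
    also have "\<dots> = exp (-(3/2) * (complex_of_real (ln 4) + Ln a))" by (simp only: lnA)
    also have "\<dots> = exp (-(3/2) * complex_of_real (ln 4)) * exp (-(3/2) * Ln a)"
      by (simp only: distrib_left exp_add)
    finally show ?thesis unfolding A .
  qed
  have cl: "c\<^sup>2 * l = (D1\<^sup>2 - 4 * D2 * D0) / (64 * a * b20 ^ 4)"
  proof -
    have "c\<^sup>2 * l = 1/8 * (exp (1/2 * Ln a) * exp (-(3/2) * Ln a)) * (1/8) * ((D1\<^sup>2 - 4 * D2 * D0) / b20 ^ 4)"
      unfolding l_def lam_def Let_def D2_def[symmetric] D1_def[symmetric] D0_def[symmetric] P e8 c2
      by (simp add: algebra_simps)
    also have "exp (1/2 * Ln a) * exp (-(3/2) * Ln a) = inverse a"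
    proof -
      have e: "1/2 * Ln a + -(3/2) * Ln a = - Ln a" by simp
      have "exp (1/2 * Ln a) * exp (-(3/2) * Ln a) = exp (- Ln a)" by (metis exp_add e)
      then show ?thesis using a0 by (simp add: exp_minus)
    qed
    finally show ?thesis by (simp add: field_simps)
  qed
  have "4 * b20\<^sup>2 * (c\<^sup>2 * ((c * (x + d))\<^sup>2 - l)) = 4 * b20\<^sup>2 * (c ^ 4 * (x + d)\<^sup>2 - c\<^sup>2 * l)"
    by (simp add: algebra_simps power2_eq_square power4_eq_xxxx)
  also have "\<dots> = - (D2 * x\<^sup>2 + D1 * x + D0)"
    unfolding c4 cl a_def d_def D2_def[symmetric] D1_def[symmetric]
    using b20 D2 unfolding D2_def[symmetric] by (simp add: field_simps power2_eq_square power4_eq_xxxx)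
  finally show "4 * b20\<^sup>2 * (c\<^sup>2 * ((c * (x + d))\<^sup>2 - l)) = - (Delta2 b20 b11 b02 * x\<^sup>2 + Delta1 b20 b11 b10 b01 * x + Delta0 b20 b11 b10 b00)"
    unfolding D2_def D1_def D0_def .
qed



lemma islimpt_reals0: "(0::complex) islimpt range complex_of_real"
  unfolding islimpt_approachable
proof (intro allI impI)
  fix e :: real assume "e > 0"
  then show "\<exists>x'\<in>range complex_of_real. x' \<noteq> 0 \<and> dist x' 0 < e"
    using rangeI[of complex_of_real "e/2"] by (intro bexI[of _ "complex_of_real (e/2)"]) auto
qed

theorem proposition4p9:
  fixes b20 b11 b02 b10 b01 b00 :: complex
  assumes "b20 \<noteq> 0" and "Delta2 b20 b11 b02 \<noteq> 0"
  defines "u1 \<equiv> usol w1 b20 b11 b02 b10 b01 b00"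
      and "u2 \<equiv> usol w2 b20 b11 b02 b10 b01 b00"
  shows "u1 holomorphic_on UNIV \<and> u2 holomorphic_on UNIV
       \<and> (\<forall>x. Bop b20 b11 b02 b10 b01 b00 u1 x = 0)
       \<and> (\<forall>x. Bop b20 b11 b02 b10 b01 b00 u2 x = 0)
       \<and> (\<forall>c1 c2 :: complex. (\<forall>x::real. c1 * u1 (complex_of_real x) + c2 * u2 (complex_of_real x) = 0)
             \<longrightarrow> c1 = 0 \<and> c2 = 0)"
proof -
  define c where "c = (- Delta2 b20 b11 b02 / (4 * b20\<^sup>2)) powr (1/4)"
  define d where "d = Delta1 b20 b11 b10 b01 / (2 * Delta2 b20 b11 b02)"
  define l where "l = lam b20 b11 b02 b10 b01 b00"
  define E where "E x = exp (- \<i> / (4 * b20) * (b11 * x\<^sup>2 + 2 * b10 * x))" for x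
  have key: "\<And>x. 4 * b20\<^sup>2 * (c\<^sup>2 * ((c * (x + d))\<^sup>2 - l))
        = - (Delta2 b20 b11 b02 * x\<^sup>2 + Delta1 b20 b11 b10 b01 * x + Delta0 b20 b11 b10 b00)"
    unfolding c_def d_def l_def by (rule params(1)[OF assms(1,2)])
  have c0: "c \<noteq> 0" unfolding c_def by (rule params(2)[OF assms(1,2)])
  have u1eq: "u1 = (\<lambda>x. exp (- \<i> / (4 * b20) * (b11 * x\<^sup>2 + 2 * b10 * x)) * w1 l (c * (x + d)))"
    unfolding u1_def usol_def Let_def c_def d_def l_def by simp
  have u2eq: "u2 = (\<lambda>x. exp (- \<i> / (4 * b20) * (b11 * x\<^sup>2 + 2 * b10 * x)) * w2 l (c * (x + d)))"
    unfolding u2_def usol_def Let_def c_def d_def l_def by simp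
  obtain V1 where V1: "\<And>z. (w1 l has_field_derivative V1 z) (at z)" "\<And>z. (V1 has_field_derivative (z\<^sup>2 - l) * w1 l z) (at z)"
    using w1_derivs[of l] by blast
  obtain V2 where V2: "V2 0 = 1" "\<And>z. (w2 l has_field_derivative V2 z) (at z)" "\<And>z. (V2 has_field_derivative (z\<^sup>2 - l) * w2 l z) (at z)"
    using w2_derivs[of l] by blast
  note U1 = u_gen[OF V1(1) V1(2) assms(1) key, folded u1eq]
  note U2 = u_gen[OF V2(2) V2(3) assms(1) key, folded u2eq]
  have hol1: "u1 holomorphic_on UNIV" by (rule U1(1))
  have hol2: "u2 holomorphic_on UNIV" by (rule U2(1))
  have indep: "c1 = 0 \<and> c2 = 0" if H: "\<forall>x::real. c1 * u1 (complex_of_real x) + c2 * u2 (complex_of_real x) = 0" for c1 c2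
  proof -
    have g0: "c1 * u1 w + c2 * u2 w = 0" for w
      by (rule analytic_continuation[of "\<lambda>z. c1 * u1 z + c2 * u2 z" UNIV "range complex_of_real" 0])
         (use H hol1 hol2 islimpt_reals0 in \<open>auto intro!: holomorphic_intros\<close>)
    have E0: "E x \<noteq> 0" for x unfolding E_def by simp
    have w1z: "w1 l 0 = 1" by (simp add: w1_def kummer_zero)
    have w2z: "w2 l 0 = 0" by (simp add: w2_def)
    have "c1 * u1 (-d) + c2 * u2 (-d) = 0" by (rule g0)
    then have "c1 * E (-d) = 0" unfolding u1eq u2eq E_def by (simp add: w1z w2z)
    then have c1: "c1 = 0" using E0 by simp
    have c2: "c2 = 0"
    proof (rule ccontr)
      assume c2: "c2 \<noteq> 0"
      have "w2 l z = 0" for z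
      proof -
        have "c1 * u1 (z / c - d) + c2 * u2 (z / c - d) = 0" by (rule g0)
        then have "c2 * (E (z / c - d) * w2 l z) = 0" using c0 unfolding c1 u2eq E_def by simp
        then show ?thesis using c2 E0 by simp
      qed
      then have "w2 l = (\<lambda>_. 0)" by auto
      then have "((\<lambda>_. 0) has_field_derivative 1) (at (0::complex))" using V2(2)[of 0] V2(1) by simp
      moreover have "((\<lambda>_. 0) has_field_derivative 0) (at (0::complex))" by simp
      ultimately show False using DERIV_unique by fastforce
    qed
    show ?thesis using c1 c2 by simp
  qed
  show ?thesis using hol1 hol2 U1(2) U2(2) indep by blast
qed

end
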